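(* Let $n_0\ge2$ be an integer and define $\mathcal{X}_{n_0}(s)=\sum_{n\ge n_0}x(n)n^{-s}$, $\mathcal{Y}_{n_0}(s)=\sum_{n\ge n_0}y(n)n^{-s}$, $\mathcal{Z}_{n_0}(s)=\sum_{n\ge n_0}z(n)n^{-s}$. Set $$C=I-\begin{pmatrix}2^{-s}&2^{-s}&2^{-s}\\2^{1-s}&0&2^{1-s}\\2^{1-s}&2^{1-s}&0\end{pmatrix}.$$ Then $C\,(\mathcal{X}_{n_0}(s),\mathcal{Y}_{n_0}(s),\mathcal{Z}_{n_0}(s))^\top=(\mathcal{J}_{n_0}(s),\mathcal{K}_{n_0}(s),\mathcal{L}_{n_0}(s))^\top$, where $$\mathcal{J}_{n_0}(s)=2^{-s}\Sigma(s,-\tfrac12,\mathcal{Y}_{n_0})-\frac{y(n_0)}{(2n_0-1)^s}+\sum_{n_0\le n<2n_0}\frac{x(n)}{n^s},$$ $$\mathcal{K}_{n_0}(s)=2^{-s}\Sigma(s,1,\mathcal{X}_{n_0})+2^{-s}\Sigma(s,-\tfrac12,\mathcal{X}_{n_0})+2^{-s}\Sigma(s,\tfrac12,\mathcal{Z}_{n_0})+\frac{x(n_0-1)}{(2n_0)^s}-\frac{x(n_0)}{(2n_0-1)^s}+\sum_{n_0\le n<2n_0}\frac{y(n)}{n^s},$$ $$\mathcal{L}_{n_0}(s)=2^{1-s}\Sigma(s,-\tfrac12,\mathcal{Y}_{n_0})-\frac{2y(n_0)}{(2n_0-1)^s}+\sum_{n_0\le n<2n_0}\frac{z(n)}{n^s},$$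 with $\Sigma(s,\beta,\mathcal{D})=\sum_{k\ge1}\binom{-s}{k}\beta^k\mathcal{D}(s+k)$; and this provides meromorphic continuations of $\mathcal{X}_{n_0}$, $\mathcal{Y}_{n_0}$, $\mathcal{Z}_{n_0}$ to $\operatorname{Re}s>1$ whose only possible poles are at $\kappa+\frac{2\pi i\ell}{\log2}$, $\ell\in\mathbb{Z}$, all of which are simple poles, where $\kappa=\log_2(3+\sqrt{17})-1$.
   Context: Pascal's rhombus consists of integers $r_{i,j}$ for $i\ge0$, $j\in\mathbb{Z}$, with $r_{0,j}=0$ for all $j$, $r_{1,0}=1$, $r_{1,j}=0$ for $j\ne0$, and $r_{i,j}=r_{i-1,j-1}+r_{i-1,j}+r_{i-1,j+1}+r_{i-2,j}$ for $i\ge2$. For $n\ge1$: $x(n)$ is the number of $j\in\mathbb{Z}$ with $r_{n,j}$ odd; $y(n)$ is the number of $j\in\mathbb{Z}$ with $r_{2n-1,2j}$ odd; $z(n)$ is the number of $j\in\mathbb{Z}$ with $r_{2n,2j-1}$ odd; $x(0)=y(0)=z(0)=0$. *)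

theory Defs
  imports "HOL-Complex_Analysis.Complex_Analysis"
begin

fun rh :: "nat \<Rightarrow> int \<Rightarrow> int" where
  "rh 0 j = 0"
| "rh (Suc 0) j = (if j = 0 then 1 else 0)"
| "rh (Suc (Suc i)) j = rh (Suc i) (j - 1) + rh (Suc i) j + rh (Suc i) (j + 1) + rh i j"

definition xr :: "nat \<Rightarrow> nat" where
  "xr n = (if n = 0 then 0 else card {j::int. odd (rh n j)})"

definition yr :: "nat \<Rightarrow> nat" where
  "yr n = (if n = 0 then 0 else card {j::int. odd (rh (2*n - 1) (2*j))})"

definition zr :: "nat \<Rightarrow> nat" where
  "zr n = (if n = 0 then 0 else card {j::int. odd (rh (2*n) (2*j - 1))})"

definition dser :: "(nat \<Rightarrow> nat) \<Rightarrow> nat \<Rightarrow> complex \<Rightarrow> complex" where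
  "dser a n0 s = (\<Sum>n. if n0 \<le> n then of_nat (a n) / (of_nat n) powr s else 0)"

definition Sig :: "complex \<Rightarrow> complex \<Rightarrow> (complex \<Rightarrow> complex) \<Rightarrow> complex" where
  "Sig s \<beta> D = (\<Sum>k. ((- s) gchoose (Suc k)) * \<beta> ^ (Suc k) * D (s + of_nat (Suc k)))"

definition kappa :: real where
  "kappa = log 2 (3 + sqrt 17) - 1"

definition pole_set :: "complex set" where
  "pole_set = {complex_of_real kappa + 2 * pi * \<i> * of_int l / complex_of_real (ln 2) | l. True}"

text \<open>F is a meromorphic continuation of D to Re s > 1 agreeing with D where the series
  converges absolutely (Re s > 2 suffices), analytic off pole_set, with only simple poles.\<close>
definition good_continuation :: "(complex \<Rightarrow> complex) \<Rightarrow> (complex \<Rightarrow> complex) \<Rightarrow> bool" where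
  "good_continuation D F \<longleftrightarrow>
     F meromorphic_on {s. 1 < Re s}
   \<and> (\<forall>s. 2 < Re s \<longrightarrow> F s = D s)
   \<and> (\<forall>s. 1 < Re s \<and> s \<notin> pole_set \<longrightarrow> F analytic_on {s})
   \<and> (\<forall>s\<in>pole_set. is_pole F s \<longrightarrow> zorder F s = -1)"

end

theory Submission
  imports Defs
begin


definition pp :: "nat \<Rightarrow> int \<Rightarrow> bool" where "pp n j = odd (rh n j)"

lemma pp0[simp]: "pp 0 j = False" by (simp add: pp_def)
lemma pp1: "pp (Suc 0) j = (j = 0)" by (simp add: pp_def)
lemma pp_rec: "pp (Suc (Suc i)) j = (pp (Suc i) (j-1) \<noteq> (pp (Suc i) j \<noteq> (pp (Suc i) (j+1) \<noteq> pp i j)))"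
  by (auto simp add: pp_def)

lemma rh_supp: "\<bar>j\<bar> \<ge> int n \<Longrightarrow> rh n j = 0"
proof (induction n j rule: rh.induct)
  case (3 i j)
  then show ?case by (simp del: rh.simps add: rh.simps(3))
qed auto

lemma pp_supp: "pp n j \<Longrightarrow> \<bar>j\<bar> < int n"
  using rh_supp[of n j] by (force simp: pp_def)

lemma fin_pp: "finite {j. pp n j}"
  by (rule finite_subset[of _ "{-int n..int n}"]) (auto dest!: pp_supp simp: abs_less_iff)

lemma dbl: "pp (2*n) (2*j) = pp n j \<and> pp (2*n) (2*j+1) = (pp n j \<noteq> pp n (j+1))
   \<and> pp (2*n+1) (2*j) = (pp (n+1) j \<noteq> pp n j) \<and> \<not> pp (2*n+1) (2*j+1)"
proof (induction n arbitrary: j)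
  case 0
  then show ?case by (auto simp: pp1) presburger+
next
  case (Suc n)
  have e0: "pp (2*n+2) (2*k) = pp (n+1) k" for k
  proof -
    have "pp (2*n+2) (2*k) = (pp (2*n+1) (2*(k-1)+1) \<noteq> (pp (2*n+1) (2*k) \<noteq> (pp (2*n+1) (2*k+1) \<noteq> pp (2*n) (2*k))))"
      using pp_rec[of "2*n" "2*k"] by (simp add: algebra_simps numeral_2_eq_2)
    then show ?thesis using Suc.IH[of k] Suc.IH[of "k-1"] by auto
  qed
  have e1: "pp (2*n+2) (2*k+1) = (pp (n+1) k \<noteq> pp (n+1) (k+1))" for k
  proof -
    have "pp (2*n+2) (2*k+1) = (pp (2*n+1) (2*k) \<noteq> (pp (2*n+1) (2*k+1) \<noteq> (pp (2*n+1) (2*(k+1)) \<noteq> pp (2*n) (2*k+1))))"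
      using pp_rec[of "2*n" "2*k+1"] by (simp add: algebra_simps numeral_2_eq_2)
    then show ?thesis using Suc.IH[of k] Suc.IH[of "k+1"] by auto
  qed
  have o0: "pp (2*n+3) (2*j) = (pp (n+2) j \<noteq> pp (n+1) j)"
  proof -
    have "pp (2*n+3) (2*j) = (pp (2*n+2) (2*(j-1)+1) \<noteq> (pp (2*n+2) (2*j) \<noteq> (pp (2*n+2) (2*j+1) \<noteq> pp (2*n+1) (2*j))))"
      using pp_rec[of "2*n+1" "2*j"] by (simp add: algebra_simps numeral_2_eq_2 numeral_3_eq_3)
    moreover have "pp (n+2) j = (pp (n+1) (j-1) \<noteq> (pp (n+1) j \<noteq> (pp (n+1) (j+1) \<noteq> pp n j)))"
      using pp_rec[of n j] by (simp add: numeral_2_eq_2)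
    ultimately show ?thesis using Suc.IH[of j] e0[of j] e1[of j] e1[of "j-1"] by auto
  qed
  have o1: "\<not> pp (2*n+3) (2*j+1)"
  proof -
    have "pp (2*n+3) (2*j+1) = (pp (2*n+2) (2*j) \<noteq> (pp (2*n+2) (2*j+1) \<noteq> (pp (2*n+2) (2*(j+1)) \<noteq> pp (2*n+1) (2*j+1))))"
      using pp_rec[of "2*n+1" "2*j+1"] by (simp add: algebra_simps numeral_2_eq_2 numeral_3_eq_3)
    then show ?thesis using Suc.IH[of j] e0[of j] e1[of j] e0[of "j+1"] by auto
  qed
  show ?case using e0 e1 o0 o1 by (simp add: algebra_simps numeral_3_eq_3)
qed

lemma card_split: assumes "finite {k::int. Q k}"
  shows "card {k. Q k} = card {i. Q (2*i)} + card {i. Q (2*i+1)}"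
proof -
  have "{k. Q k} = (\<lambda>i. 2*i) ` {i. Q (2*i)} \<union> (\<lambda>i. 2*i+1) ` {i. Q (2*i+1)}"
    by (auto simp: image_iff) (metis dvd_mult_div_cancel odd_two_times_div_two_succ)
  moreover have "finite {i. Q (2*i)}"
    by (rule finite_imageD[of "\<lambda>i. 2*i"]) (auto intro: finite_subset[OF _ assms] simp: inj_on_def)
  moreover have "finite {i. Q (2*i+1)}"
    by (rule finite_imageD[of "\<lambda>i. 2*i+1"]) (auto intro: finite_subset[OF _ assms] simp: inj_on_def)
  moreover have "(\<lambda>i. 2*i) ` {i. Q (2*i)} \<inter> (\<lambda>i. 2*i+1) ` {i. Q (2*i+1)} = {}"
    by auto presburger
  ultimately show ?thesis
    by (simp add: card_Un_disjoint card_image inj_on_def)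
qed

lemma card_shift: "card {j::int. Q (j + c)} = card {j. Q j}"
proof -
  have "{j. Q (j + c)} = (\<lambda>j. j - c) ` {j. Q j}" by (auto simp: image_iff) (metis add_diff_cancel)
  then show ?thesis by (simp add: card_image inj_on_def)
qed

lemma dE[simp]: "pp (2*n) (2*i) = pp n i" using dbl by blast
lemma dO[simp]: "pp (2*n) (2*i+1) = (pp n i \<noteq> pp n (i+1))" using dbl by blast
lemma oE[simp]: "pp (2*n+1) (2*i) = (pp (n+1) i \<noteq> pp n i)" using dbl by blast
lemma oO[simp]: "\<not> pp (2*n+1) (2*i+1)" using dbl by blast
lemma dM[simp]: "pp (2*n) (2*i-1) = (pp n (i-1) \<noteq> pp n i)"
  using dO[of n "i-1"] by (simp add: algebra_simps)
lemma oM[simp]: "\<not> pp (2*n+1) (2*i-1)"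
  using oO[of n "i-1"] by (simp add: algebra_simps)

lemma oE'[simp]: "pp (Suc (2*n)) (2*i) = (pp (Suc n) i \<noteq> pp n i)" using oE[of n i] by simp
lemma oO'[simp]: "\<not> pp (Suc (2*n)) (2*i+1)" using oO[of n i] by simp
lemma oM'[simp]: "\<not> pp (Suc (2*n)) (2*i-1)" using oM[of n i] by simp

lemma fin_xor: "finite {k. pp m k \<noteq> pp m' k}"
  by (rule finite_subset[of _ "{k. pp m k} \<union> {k. pp m' k}"]) (auto simp: fin_pp)
lemma fin_one: "finite {k. P k \<and> pp m k}"
  by (rule finite_subset[OF _ fin_pp[of m]]) auto
lemma fin_diff: "finite {k. pp m (k-1) \<noteq> pp m k}"
proof -
  have "{k. pp m (k-1) \<noteq> pp m k} \<subseteq> (\<lambda>k. k+1) ` {k. pp m k} \<union> {k. pp m k}"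
    by (auto simp: image_iff) (metis diff_add_cancel)
  then show ?thesis by (rule finite_subset) (auto simp: fin_pp)
qed

lemma fin_diff2: "finite {k. pp m k \<noteq> pp m (k+1)}"
proof -
  have "{k. pp m k \<noteq> pp m (k+1)} \<subseteq> (\<lambda>k. k-1) ` {k. pp m k} \<union> {k. pp m k}"
    by (auto simp: image_iff) (metis add_diff_cancel)
  then show ?thesis by (rule finite_subset) (auto simp: fin_pp)
qed

lemma xr_card: "xr n = card {j. pp n j}"
  by (cases "n = 0") (auto simp: xr_def pp_def)
lemma yr_card: "yr n = card {j. pp (2*n-1) (2*j)}"
  by (cases "n = 0") (auto simp: yr_def pp_def)
lemma zr_card: "zr n = card {j. pp (2*n) (2*j-1)}"
  by (cases "n = 0") (auto simp: zr_def pp_def)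

lemma zr_alt: "zr n = card {i. pp n i \<noteq> pp n (i+1)}"
proof -
  have "zr n = card {j. pp n (j + -1) \<noteq> pp n (j + -1 + 1)}"
    unfolding zr_card by simp
  also have "\<dots> = card {i. pp n i \<noteq> pp n (i+1)}"
    by (rule card_shift[of "\<lambda>i. pp n i \<noteq> pp n (i+1)"])
  finally show ?thesis .
qed

lemma rec1: "xr (2*n) = xr n + zr n"
  unfolding xr_card[of "2*n"] zr_alt
  by (subst card_split) (auto simp: fin_pp xr_card)

lemma rec2: "xr (2*n+1) = yr (n+1)"
proof -
  have "xr (2*n+1) = card {i. pp (2*n+1) (2*i)} + card {i. pp (2*n+1) (2*i+1)}"
    unfolding xr_card by (rule card_split[OF fin_pp])
  then show ?thesis by (simp add: yr_card)
qed

lemma rec3: "n \<ge> 1 \<Longrightarrow> yr (2*n) = zr n + xr (n-1)"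
proof -
  assume n: "n \<ge> 1"
  obtain m where m: "n = m + 1" using n by (metis add.commute le_Suc_ex)
  have "yr (2*n) = card {j. pp (2*(2*m+1)+1) (2*j)}"
    unfolding yr_card m by (simp add: algebra_simps)
  also have "\<dots> = card {j. pp (2*m+2) j \<noteq> pp (2*m+1) j}"
    unfolding oE by (simp add: algebra_simps)
  also have "\<dots> = card {i. pp (2*m+2) (2*i) \<noteq> pp (2*m+1) (2*i)} + card {i. pp (2*m+2) (2*i+1) \<noteq> pp (2*m+1) (2*i+1)}"
    by (rule card_split[OF fin_xor])
  also have "{i. pp (2*m+2) (2*i) \<noteq> pp (2*m+1) (2*i)} = {i. pp m i}"
  proof -
    have h: "pp (2*m+2) (2*i) = pp (m+1) i" for i using dE[of "Suc m" i] by simp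
    show ?thesis using h[simplified] by auto
  qed
  also have "{i. pp (2*m+2) (2*i+1) \<noteq> pp (2*m+1) (2*i+1)} = {i. pp (m+1) i \<noteq> pp (m+1) (i+1)}"
  proof -
    have h: "pp (2*m+2) (2*i+1) = (pp (m+1) i \<noteq> pp (m+1) (i+1))" for i using dO[of "Suc m" i] by simp
    show ?thesis using h[simplified] by auto
  qed
  finally show ?thesis by (simp add: m xr_card zr_alt)
qed

lemma rec4: "yr (2*n+1) = zr n + xr (n+1)"
proof -
  have "yr (2*n+1) = card {j. pp (2*(2*n)+1) (2*j)}"
    unfolding yr_card by (simp add: algebra_simps)
  also have "\<dots> = card {j. pp (2*n+1) j \<noteq> pp (2*n) j}"
    unfolding oE by (simp add: algebra_simps)
  also have "\<dots> = card {i. pp (2*n+1) (2*i) \<noteq> pp (2*n) (2*i)} + card {i. pp (2*n+1) (2*i+1) \<noteq> pp (2*n) (2*i+1)}"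
    by (rule card_split[OF fin_xor])
  also have "{i. pp (2*n+1) (2*i) \<noteq> pp (2*n) (2*i)} = {i. pp (n+1) i}"
    by auto
  also have "{i. pp (2*n+1) (2*i+1) \<noteq> pp (2*n) (2*i+1)} = {i. pp n i \<noteq> pp n (i+1)}"
    by auto
  finally show ?thesis by (simp add: xr_card zr_alt)
qed

lemma rec5: "zr (2*n) = 2 * xr n"
proof -
  have "zr (2*n) = card {i. pp (2*n) i \<noteq> pp (2*n) (i+1)}" by (rule zr_alt)
  also have "\<dots> = card {i. pp (2*n) (2*i) \<noteq> pp (2*n) (2*i+1)} + card {i. pp (2*n) (2*i+1) \<noteq> pp (2*n) (2*i+1+1)}"
    by (rule card_split) (rule finite_subset[OF _ fin_diff2[of "2*n"]], auto)
  also have "{i. pp (2*n) (2*i) \<noteq> pp (2*n) (2*i+1)} = {i. pp n (i+1)}"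
    by auto
  also have "{i. pp (2*n) (2*i+1) \<noteq> pp (2*n) (2*i+1+1)} = {i. pp n i}"
  proof -
    have "pp (2*n) (2*i+1+1) = pp n (i+1)" for i using dE[of n "i+1"] by (simp add: algebra_simps)
    then show ?thesis by auto
  qed
  also have "card {i. pp n (i+1)} = card {i. pp n i}" by (rule card_shift)
  finally show ?thesis by (simp add: xr_card)
qed

lemma rec6: "zr (2*n+1) = 2 * yr (n+1)"
proof -
  have "zr (2*n+1) = card {i. pp (2*n+1) i \<noteq> pp (2*n+1) (i+1)}" by (rule zr_alt)
  also have "\<dots> = card {i. pp (2*n+1) (2*i) \<noteq> pp (2*n+1) (2*i+1)} + card {i. pp (2*n+1) (2*i+1) \<noteq> pp (2*n+1) (2*i+1+1)}"
    by (rule card_split) (rule finite_subset[OF _ fin_diff2[of "2*n+1"]], auto)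
  also have "{i. pp (2*n+1) (2*i) \<noteq> pp (2*n+1) (2*i+1)} = {i. pp (2*n+1) (2*i)}"
    by auto
  also have "{i. pp (2*n+1) (2*i+1) \<noteq> pp (2*n+1) (2*i+1+1)} = {i. pp (2*n+1) (2*(i+1))}"
  proof -
    have h: "2*i+1+1 = 2*(i+1)" for i::int by simp
    show ?thesis unfolding h by simp
  qed
  also have "card {i. pp (2*n+1) (2*(i+1))} = card {i. pp (2*n+1) (2*i)}"
    by (rule card_shift[of "\<lambda>i. pp (2*n+1) (2*i)" 1])
  finally show ?thesis by (simp add: yr_card)
qed

lemma bnd_x: "xr n \<le> 2*n+1"
proof -
  have "{j. pp n j} \<subseteq> {-int n..int n}" by (auto dest!: pp_supp simp: abs_less_iff)
  then have "card {j. pp n j} \<le> card {-int n..int n}" by (rule card_mono[rotated]) simp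
  then show ?thesis by (simp add: xr_card)
qed
lemma bnd_y: "yr n \<le> 2*n+1"
proof -
  have "{j. pp (2*n-1) (2*j)} \<subseteq> {-int n..int n}" by (auto dest!: pp_supp simp: abs_less_iff)
  then have "card {j. pp (2*n-1) (2*j)} \<le> card {-int n..int n}" by (rule card_mono[rotated]) simp
  then show ?thesis by (simp add: yr_card)
qed
lemma bnd_z: "zr n \<le> 2*n+1"
proof -
  have "{j. pp (2*n) (2*j-1)} \<subseteq> {-int n..int n}" by (auto dest!: pp_supp simp: abs_less_iff)
  then have "card {j. pp (2*n) (2*j-1)} \<le> card {-int n..int n}" by (rule card_mono[rotated]) simp
  then show ?thesis by (simp add: zr_card)
qed


lemma kappa_gt1: "kappa > 1"
proof -
  have "sqrt 17 > 1" by (simp add: real_less_rsqrt)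
  then have "3 + sqrt 17 > 2 powr 2" by simp
  then have "log 2 (3 + sqrt 17) > 2"
    by (subst less_log_iff) (auto intro: add_pos_nonneg)
  then show ?thesis by (simp add: kappa_def)
qed

lemma Re_pole_set: "z \<in> pole_set \<Longrightarrow> Re z = kappa"
  by (auto simp: pole_set_def)

lemma good_cont_generic:
  assumes N: "N analytic_on {s. 1 < Re s}" and d: "d analytic_on {s. 1 < Re s}"
    and zeros: "\<And>s. 1 < Re s \<Longrightarrow> d s = 0 \<Longrightarrow> s \<in> pole_set \<and> deriv d s \<noteq> 0"
    and agree: "\<And>s. 2 < Re s \<Longrightarrow> N s / d s = D s"
  shows "good_continuation D (\<lambda>s. N s / d s)"
  unfolding good_continuation_def
proof (intro conjI allI impI ballI)
  show "(\<lambda>s. N s / d s) meromorphic_on {s. 1 < Re s}"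
    by (intro meromorphic_on_divide analytic_on_imp_meromorphic_on N d)
  show "N s / d s = D s" if "2 < Re s" for s using agree that by blast
  fix s assume s: "1 < Re s \<and> s \<notin> pole_set"
  then have "d s \<noteq> 0" using zeros by blast
  moreover have "N analytic_on {s}" "d analytic_on {s}"
    using s analytic_on_subset[OF N] analytic_on_subset[OF d] by auto
  ultimately show "(\<lambda>s. N s / d s) analytic_on {s}"
    by (intro analytic_on_divide) auto
next
  fix z assume z: "z \<in> pole_set" and pole: "is_pole (\<lambda>s. N s / d s) z"
  have Rz: "1 < Re z" using Re_pole_set[OF z] kappa_gt1 by simp
  have Na: "N analytic_on {z}" "d analytic_on {z}"
    using Rz analytic_on_subset[OF N] analytic_on_subset[OF d] by auto
  have dz: "d z = 0"
  proof (rule ccontr)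
    assume "d z \<noteq> 0"
    then have "(\<lambda>s. N s / d s) analytic_on {z}" using Na by (intro analytic_on_divide) auto
    then show False using pole analytic_at_imp_no_pole by blast
  qed
  have dd: "deriv d z \<noteq> 0" using zeros[OF Rz dz] by blast
  have zd: "zorder d z = 1"
    by (rule zorder_zero_eqI'[OF Na(2)]) (use dz dd in auto)
  have ev: "\<forall>\<^sub>F w in at z. N w / d w \<noteq> 0" using non_zero_neighbour_pole[OF pole] .
  have fN: "\<exists>\<^sub>F w in at z. N w \<noteq> 0"
    using eventually_frequently[OF _ eventually_mono[OF ev]] by force
  have fd: "\<exists>\<^sub>F w in at z. d w \<noteq> 0"
    using eventually_frequently[OF _ eventually_mono[OF ev]] by force
  have mN: "N meromorphic_on {z}" "d meromorphic_on {z}"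
    using Na analytic_on_imp_meromorphic_on by auto
  have "zorder (\<lambda>s. N s / d s) z = zorder N z - zorder d z"
    by (rule zorder_divide[OF mN(1) fN mN(2) fd])
  moreover have "zorder N z \<ge> 0" by (rule zorder_ge_0[OF Na(1) fN])
  moreover have "zorder (\<lambda>s. N s / d s) z < 0"
  proof (rule isolated_pole_imp_neg_zorder[OF _ pole])
    have "(\<lambda>s. N s / d s) meromorphic_on {z}"
      by (intro meromorphic_on_divide mN)
    then show "isolated_singularity_at (\<lambda>s. N s / d s) z"
      by (simp add: meromorphic_at_iff)
  qed
  ultimately show "zorder (\<lambda>s. N s / d s) z = -1" using zd by linarith
qed


definition uu :: "complex \<Rightarrow> complex" where "uu s = 2 powr (-s)"
definition qq :: "complex \<Rightarrow> complex" where "qq u = 1 - 3*u - 2*u^2"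

lemma norm_uu: "norm (uu s) = 2 powr (- Re s)"
  unfolding uu_def by (subst norm_powr_real_powr) auto

lemma norm_uu_lt: "1 < Re s \<Longrightarrow> norm (uu s) < 1/2"
proof -
  assume "1 < Re s"
  then have "(2::real) powr (- Re s) < 2 powr (-1)" by (intro powr_less_mono) auto
  then show ?thesis by (simp add: norm_uu powr_minus)
qed

lemma uu_nz: "uu s \<noteq> 0" by (simp add: uu_def)

lemma uu_deriv: "(uu has_field_derivative (- Ln 2 * uu s)) (at s)"
proof -
  have e: "uu = (\<lambda>s. exp (-s * Ln 2))" by (auto simp: uu_def powr_def fun_eq_iff)
  show ?thesis unfolding e by (auto intro!: derivative_eq_intros)
qed

definition u0 :: real where "u0 = (sqrt 17 - 3) / 4"

lemma sqrt17: "sqrt 17 * sqrt 17 = (17::real)" by simp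
lemma sqrt17_bounds: "4 < sqrt (17::real)" "sqrt (17::real) < 5"
  by (auto simp: real_less_rsqrt real_less_lsqrt)

lemma u0_pos: "u0 > 0" using sqrt17_bounds by (simp add: u0_def)

lemma qq_factor: "qq u = -2 * (u - of_real u0) * (u - of_real ((-3 - sqrt 17)/4))"
proof -
  have "complex_of_real (sqrt 17) * complex_of_real (sqrt 17) = 17"
    by (metis of_real_mult of_real_numeral sqrt17)
  then show ?thesis unfolding qq_def u0_def
    by (simp add: algebra_simps power2_eq_square) (simp add: field_simps)
qed

lemma qq_zero: assumes "norm u < 1/2" "qq u = 0" shows "u = of_real u0"
proof -
  have "norm (complex_of_real ((-3 - sqrt 17)/4)) > 1/2"
    unfolding norm_of_real using sqrt17_bounds by simp
  then have "u \<noteq> of_real ((-3 - sqrt 17)/4)" using assms(1) by (metis less_asym)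
  then show ?thesis using assms(2) by (simp add: qq_factor)
qed

lemma kappa_eq: "kappa = - ln u0 / ln 2"
proof -
  have "u0 = 2 / (3 + sqrt 17)"
    using sqrt17 sqrt17_bounds by (simp add: u0_def field_simps)
  then have "ln u0 = ln 2 - ln (3 + sqrt 17)"
    using ln_div[of 2 "3+sqrt 17"] sqrt17_bounds by simp
  then show ?thesis by (simp add: kappa_def log_def diff_divide_distrib)
qed

lemma uu_eq_u0: assumes "uu s = of_real u0" shows "s \<in> pole_set"
proof -
  have "exp (- s * Ln 2) = exp (complex_of_real (ln u0))"
    using assms u0_pos by (simp add: uu_def powr_def exp_of_real[symmetric] flip: Ln_of_real)
  then obtain n :: int where n: "- s * Ln 2 = complex_of_real (ln u0) + 2 * of_real pi * of_int n * \<i>"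
    by (auto simp: exp_eq)
  have L: "Ln (2::complex) = of_real (ln 2)" by (simp flip: Ln_of_real)
  have l: "complex_of_real (ln 2) \<noteq> 0" by simp
  have "s * of_real (ln 2) = - of_real (ln u0) - 2 * of_real pi * of_int n * \<i>"
    using arg_cong[OF n, of uminus] unfolding L by (simp add: algebra_simps)
  then have "s = (- of_real (ln u0) - 2 * of_real pi * of_int n * \<i>) / of_real (ln 2)"
    using l by (simp add: eq_divide_eq)
  then have "s = of_real (- ln u0 / ln 2) + 2 * pi * \<i> * of_int (-n) / of_real (ln 2)"
    by (simp add: field_simps)
  then show ?thesis unfolding pole_set_def kappa_eq by blast
qed

lemma zeros1: assumes "1 < Re s" "qq (uu s) = 0"
  shows "s \<in> pole_set \<and> deriv (\<lambda>s. qq (uu s)) s \<noteq> 0"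
proof -
  have u: "uu s = of_real u0" using qq_zero[OF norm_uu_lt[OF assms(1)] assms(2)] .
  have D: "((\<lambda>s. qq (uu s)) has_field_derivative ((-3 - 4 * uu s) * (- Ln 2 * uu s))) (at s)"
    unfolding qq_def by (auto intro!: derivative_eq_intros uu_deriv simp: algebra_simps power2_eq_square)
  have a: "-3 - 4 * uu s = of_real (-3 - 4*u0)" by (simp add: u)
  have "(-3 - 4 * uu s) \<noteq> 0" proof -
    have "-3 - 4*u0 \<noteq> 0" using u0_pos by linarith
    then show ?thesis unfolding a using of_real_eq_0_iff by blast
  qed
  moreover have "Ln (2::complex) \<noteq> 0" by (simp flip: Ln_of_real)
  ultimately have "deriv (\<lambda>s. qq (uu s)) s \<noteq> 0"
    using DERIV_imp_deriv[OF D] uu_nz by simp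
  then show ?thesis using uu_eq_u0[OF u] by blast
qed

lemma zeros2: assumes "1 < Re s" "2 * (1 + 2 * uu s) * qq (uu s) = 0"
  shows "s \<in> pole_set \<and> deriv (\<lambda>s. 2 * (1 + 2 * uu s) * qq (uu s)) s \<noteq> 0"
proof -
  have nu: "norm (uu s) < 1/2" using norm_uu_lt[OF assms(1)] .
  have "1 + 2 * uu s \<noteq> 0"
  proof
    assume "1 + 2 * uu s = 0"
    then have "uu s = -1/2" by (simp add: field_simps) (metis add.commute add_eq_0_iff)
    then show False using nu by simp
  qed
  then have q0: "qq (uu s) = 0" using assms(2) by (metis mult_eq_0_iff zero_neq_numeral)
  have u: "uu s = of_real u0" using qq_zero[OF nu q0] .
  have D: "((\<lambda>s. 2 * (1 + 2 * uu s) * qq (uu s)) has_field_derivative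
       (2 * (2 * (- Ln 2 * uu s)) * qq (uu s) + 2 * (1 + 2 * uu s) * ((-3 - 4 * uu s) * (- Ln 2 * uu s)))) (at s)"
    unfolding qq_def by (auto intro!: derivative_eq_intros uu_deriv simp: algebra_simps power2_eq_square)
  have a: "-3 - 4 * uu s = of_real (-3 - 4*u0)" by (simp add: u)
  have "(-3 - 4 * uu s) \<noteq> 0" proof -
    have "-3 - 4*u0 \<noteq> 0" using u0_pos by linarith
    then show ?thesis unfolding a using of_real_eq_0_iff by blast
  qed
  moreover have "Ln (2::complex) \<noteq> 0" by (simp flip: Ln_of_real)
  moreover have "2 + 4 * uu s \<noteq> 0"
  proof -
    have t: "2 + 4 * uu s = 2 * (1 + 2 * uu s)" by simp
    show ?thesis using t \<open>1 + 2 * uu s \<noteq> 0\<close> by (metis mult_eq_0_iff zero_neq_numeral)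
  qed
  ultimately have "deriv (\<lambda>s. 2 * (1 + 2 * uu s) * qq (uu s)) s \<noteq> 0"
    using DERIV_imp_deriv[OF D] uu_nz q0 \<open>1 + 2 * uu s \<noteq> 0\<close> by simp
  then show ?thesis using uu_eq_u0[OF u] by blast
qed


definition hs :: "(nat \<Rightarrow> nat) \<Rightarrow> real \<Rightarrow> complex \<Rightarrow> nat \<Rightarrow> complex" where
  "hs a b s n = of_nat (a n) * of_real (real n + b) powr (-s)"

definition HH :: "(nat \<Rightarrow> nat) \<Rightarrow> nat \<Rightarrow> real \<Rightarrow> complex \<Rightarrow> complex" where
  "HH a n0 b s = infsum (hs a b s) {n0..}"

definition bnd :: "(nat \<Rightarrow> nat) \<Rightarrow> bool" where "bnd a \<longleftrightarrow> (\<forall>n. a n \<le> 2*n+1)"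

lemma has_sum_diff': "(f has_sum a) A \<Longrightarrow> (g has_sum b) A \<Longrightarrow> ((\<lambda>x. f x - g x) has_sum (a - b)) A"
  for f g :: "'a \<Rightarrow> complex"
  using has_sum_add[OF _ has_sum_uminusI[of g]] by (simp add: algebra_simps)

lemma norm_ofreal_powr: "x \<ge> 0 \<Longrightarrow> norm (complex_of_real x powr s) = x powr Re s"
  by (subst norm_powr_real_powr) auto

lemma abs_summable_powr:
  assumes "c < -1" "K \<ge> 0"
  shows "(\<lambda>n::nat. K * real n powr c) summable_on A"
proof -
  have "summable (\<lambda>n::nat. real n powr c)" using assms by (simp add: summable_real_powr_iff)
  then have "summable (\<lambda>n::nat. K * real n powr c)" by (rule summable_mult)
  then have "(\<lambda>n::nat. K * real n powr c) summable_on UNIV"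
    using assms by (subst summable_on_UNIV_nonneg_real_iff) auto
  then show ?thesis
    by (rule summable_on_subset_banach) auto
qed

lemma a_bound: assumes "bnd a" "n \<ge> 1" shows "real (a n) \<le> 3 * real n"
proof -
  have "a n \<le> 2*n+1" using assms(1) by (simp add: bnd_def)
  then have "real (a n) \<le> 2 * real n + 1" using of_nat_le_iff[of "a n" "2*n+1"] by simp
  then show ?thesis using assms(2) by linarith
qed

lemma powr_half_bound:
  assumes "real n \<ge> 2" "\<bar>b\<bar> \<le> 1" "\<sigma> \<le> r" "0 \<le> \<sigma>"
  shows "(real n + b) powr (- r) \<le> 2 powr \<sigma> * real n powr (- \<sigma>)"
proof -
  have pos: "real n + b \<ge> real n / 2" using assms(1,2) by (simp add: abs_le_iff)
  have "(real n + b) powr (- r) \<le> (real n + b) powr (- \<sigma>)"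
    using pos assms by (intro powr_mono) auto
  also have "\<dots> \<le> (real n / 2) powr (- \<sigma>)"
    using pos assms by (intro powr_mono2') auto
  also have "\<dots> = 2 powr \<sigma> * real n powr (- \<sigma>)"
    using assms(1) by (simp add: powr_divide powr_minus divide_simps)
  finally show ?thesis .
qed

lemma hs_bound:
  assumes "bnd a" "\<bar>b\<bar> \<le> 1" "n \<ge> 2" "\<sigma> \<le> Re s" "0 \<le> \<sigma>"
  shows "norm (hs a b s n) \<le> 3 * 2 powr \<sigma> * real n powr (1 - \<sigma>)"
proof -
  have n2: "real n \<ge> 2" using assms(3) by simp
  have pos: "real n + b \<ge> real n / 2" using assms(2) n2 by (simp add: abs_le_iff)
  have "norm (hs a b s n) = real (a n) * (real n + b) powr (- Re s)"
    unfolding hs_def using pos n2 norm_ofreal_powr[of "real n + b" "-s"] by (simp add: norm_mult)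
  also have "\<dots> \<le> (3 * real n) * (2 powr \<sigma> * real n powr (- \<sigma>))"
    using a_bound[OF assms(1), of n] assms powr_half_bound[OF n2 assms(2) assms(4) assms(5)]
    by (intro mult_mono) auto
  also have "\<dots> = 3 * 2 powr \<sigma> * (real n powr 1 * real n powr (- \<sigma>))"
    using n2 by simp
  also have "\<dots> = 3 * 2 powr \<sigma> * real n powr (1 - \<sigma>)"
    using n2 by (simp add: powr_diff powr_minus divide_inverse)
  finally show ?thesis .
qed

lemma hs_abs_summable:
  assumes "bnd a" "\<bar>b\<bar> \<le> 1" "n0 \<ge> 2" "2 < Re s"
  shows "(\<lambda>n. norm (hs a b s n)) summable_on {n0..}"
proof -
  have g: "(\<lambda>n::nat. (3 * 2 powr Re s) * real n powr (1 - Re s)) summable_on {n0..}"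
    using assms(4) by (intro abs_summable_powr) auto
  have le: "norm (hs a b s n) \<le> (3 * 2 powr Re s) * real n powr (1 - Re s)" if "n \<in> {n0..}" for n
    using hs_bound[OF assms(1,2), of n "Re s" s] assms that by auto
  show ?thesis by (rule Infinite_Sum.abs_summable_on_comparison_test'[OF g le])
qed

lemma hs_summable:
  assumes "bnd a" "\<bar>b\<bar> \<le> 1" "n0 \<ge> 2" "2 < Re s"
  shows "hs a b s summable_on {n0..}"
  using hs_abs_summable[OF assms] by (simp add: summable_on_iff_abs_summable_on_complex)

lemma HH_has_sum:
  assumes "bnd a" "\<bar>b\<bar> \<le> 1" "n0 \<ge> 2" "2 < Re s"
  shows "(hs a b s has_sum HH a n0 b s) {n0..}"
  unfolding HH_def using hs_summable[OF assms] by simp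

lemma hs0: "n \<ge> 1 \<Longrightarrow> hs a 0 s n = of_nat (a n) / of_nat n powr s"
  by (simp add: hs_def powr_minus divide_inverse)

lemma has_sum_suminf_if:
  fixes f :: "nat \<Rightarrow> complex"
  assumes "(f has_sum S) {n0..}"
  shows "(\<Sum>n. if n0 \<le> n then f n else 0) = S"
proof -
  have e: "(f has_sum S) {n0..} \<longleftrightarrow> ((\<lambda>n. if n0 \<le> n then f n else 0) has_sum S) UNIV"
    by (rule has_sum_cong_neutral) auto
  have "(\<lambda>n. if n0 \<le> n then f n else 0) sums S"
    using assms unfolding e by (rule has_sum_imp_sums)
  then show ?thesis by (simp add: sums_iff)
qed

lemma dser_HH:
  assumes "bnd a" "n0 \<ge> 2" "2 < Re s"
  shows "dser a n0 s = HH a n0 0 s"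
proof -
  have h: "(hs a 0 s has_sum HH a n0 0 s) {n0..}"
    using HH_has_sum[OF assms(1) _ assms(2,3), of 0] by simp
  have e: "(hs a 0 s has_sum HH a n0 0 s) {n0..} \<longleftrightarrow>
      ((\<lambda>n. of_nat (a n) / of_nat n powr s) has_sum HH a n0 0 s) {n0..}"
    by (rule has_sum_cong_neutral) (use assms(2) hs0 in auto)
  from has_sum_suminf_if[OF h[unfolded e]] show ?thesis by (simp add: dser_def)
qed

definition gt :: "(nat \<Rightarrow> nat) \<Rightarrow> real \<Rightarrow> complex \<Rightarrow> nat \<Rightarrow> complex" where
  "gt a b s n = hs a b s n - hs a 0 s n"

definition Gd :: "(nat \<Rightarrow> nat) \<Rightarrow> nat \<Rightarrow> real \<Rightarrow> complex \<Rightarrow> complex" where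
  "Gd a n0 b s = (\<Sum>n. if n0 \<le> n then gt a b s n else 0)"

lemma Gd_HH:
  assumes "bnd a" "\<bar>b\<bar> \<le> 1" "n0 \<ge> 2" "2 < Re s"
  shows "Gd a n0 b s = HH a n0 b s - HH a n0 0 s"
  unfolding Gd_def gt_def
  by (rule has_sum_suminf_if, rule has_sum_diff') (use HH_has_sum assms in auto)


lemma powr_shift_real:
  assumes "real n \<ge> 2" "\<bar>b\<bar> \<le> 1"
  shows "complex_of_real (real n + b) powr (-s) = of_nat n powr (-s) * (1 + complex_of_real (b / real n)) powr (-s)"
proof -
  have "complex_of_real (real n + b) = complex_of_real (real n) * complex_of_real (1 + b / real n)"
    using assms by (simp add: field_simps)
  also have "\<dots> powr (-s) = complex_of_real (real n) powr (-s) * complex_of_real (1 + b / real n) powr (-s)"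
  proof (rule powr_times_real)
    have "1 + b / real n \<ge> 0" using assms by (simp add: abs_le_iff field_simps)
    then show "0 \<le> Re (complex_of_real (1 + b / real n))" by simp
  qed auto
  finally show ?thesis by simp
qed

lemma hs_shift_nat:
  assumes "n \<ge> 1"
  shows "hs a 0 (s + of_nat m) n = hs a 0 s n / of_nat n ^ m"
proof -
  have "complex_of_nat n powr (- (s + of_nat m)) = of_nat n powr (-s) * of_nat n powr (- of_nat m)"
    by (subst powr_add[symmetric]) simp
  also have "of_nat n powr (- of_nat m) = inverse (of_nat n ^ m :: complex)"
    using assms by (simp add: powr_minus)
  finally show ?thesis by (simp add: hs_def divide_inverse mult.assoc)
qed

lemma Sig_eq:
  assumes a: "bnd a" and b: "\<bar>b\<bar> \<le> 1" and n0: "n0 \<ge> 2" and s: "2 < Re s"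
  shows "Sig s (of_real b) (dser a n0) = HH a n0 b s - HH a n0 0 s"
proof -
  define A where "A = {n0..}"
  define F where "F = (\<lambda>(n,k). hs a 0 s n * (((-s) gchoose Suc k) * (complex_of_real (b / real n)) ^ Suc k))"
  have conv: "ereal (norm z) < conv_radius (\<lambda>k. (-s) gchoose k)" if "norm z < 1" for z :: complex
    using that by (simp add: conv_radius_gchoose)
  have zsmall: "norm (complex_of_real (b / real n)) \<le> 1/2" if "n \<in> A" for n
  proof -
    have n: "real n \<ge> 2" using that n0 by (simp add: A_def)
    have "norm (complex_of_real (b / real n)) = \<bar>b / real n\<bar>" by (rule norm_of_real)
    also have "\<dots> = \<bar>b\<bar> / real n" using n by simp
    also have "\<dots> \<le> 1/2" using b n by (simp add: field_simps)
    finally show ?thesis .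
  qed
  have inner_abs: "summable (\<lambda>k. norm (((-s) gchoose Suc k) * z ^ Suc k))" if "norm z < 1" for z :: complex
    using abs_summable_in_conv_radius[OF conv[OF that]] by (subst summable_Suc_iff)
  have inner_sums: "(\<lambda>k. ((-s) gchoose Suc k) * z ^ Suc k) sums ((1 + z) powr (-s) - 1)" if "norm z < 1" for z :: complex
    using gen_binomial_complex[OF that, of "-s"] by (subst sums_Suc_iff) simp
  have Fn: "((\<lambda>k. F (n,k)) has_sum gt a b s n) UNIV" if "n \<in> A" for n
  proof -
    let ?z = "complex_of_real (b / real n)"
    have z1: "norm ?z < 1" using zsmall[OF that] by linarith
    have n2: "real n \<ge> 2" using that n0 by (simp add: A_def)
    have "(\<lambda>k. hs a 0 s n * (((-s) gchoose Suc k) * ?z ^ Suc k)) sums (hs a 0 s n * ((1 + ?z) powr (-s) - 1))"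
      by (rule sums_mult[OF inner_sums[OF z1]])
    moreover have "hs a 0 s n * ((1 + ?z) powr (-s) - 1) = gt a b s n"
      unfolding gt_def hs_def using powr_shift_real[OF n2 b, of s] by (simp add: algebra_simps)
    moreover have "summable (\<lambda>k. norm (hs a 0 s n * (((-s) gchoose Suc k) * ?z ^ Suc k)))"
      using summable_mult[OF inner_abs[OF z1], of "norm (hs a 0 s n)"] by (simp only: norm_mult)
    ultimately show ?thesis unfolding F_def
      by (intro norm_summable_imp_has_sum) auto
  qed
  have Bsum: "(\<lambda>k. norm (((-s) gchoose Suc k) * (1/2::complex) ^ Suc k)) summable_on UNIV"
    using inner_abs[of "1/2"] by (subst summable_on_UNIV_nonneg_real_iff) auto
  define Bc where "Bc = infsum (\<lambda>k. norm (((-s) gchoose Suc k) * (1/2::complex) ^ Suc k)) UNIV"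
  have bound_k: "norm (F (n,k)) \<le> norm (hs a 0 s n) * norm (((-s) gchoose Suc k) * (1/2::complex) ^ Suc k)"
    if "n \<in> A" for n k
  proof -
    have "norm (complex_of_real (b / real n)) ^ Suc k \<le> (1/2) ^ Suc k"
      by (rule power_mono[OF zsmall[OF that]]) simp
    then have "norm ((-s) gchoose Suc k) * norm (complex_of_real (b / real n)) ^ Suc k \<le> norm ((-s) gchoose Suc k) * (1/2) ^ Suc k"
      by (rule mult_left_mono) simp
    then have "norm (hs a 0 s n) * (norm ((-s) gchoose Suc k) * norm (complex_of_real (b / real n)) ^ Suc k)
        \<le> norm (hs a 0 s n) * (norm ((-s) gchoose Suc k) * (1/2) ^ Suc k)"
      by (rule mult_left_mono) simp
    moreover have "norm (F (n,k)) = norm (hs a 0 s n) * (norm ((-s) gchoose Suc k) * norm (complex_of_real (b / real n)) ^ Suc k)"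
      unfolding F_def by (simp only: case_prod_conv norm_mult norm_power)
    moreover have "norm (((-s) gchoose Suc k) * (1/2::complex) ^ Suc k) = norm ((-s) gchoose Suc k) * (1/2) ^ Suc k"
      by (simp add: norm_mult norm_power)
    ultimately show ?thesis by simp
  qed
  have inner_abs': "(\<lambda>k. norm (F (n,k))) summable_on UNIV" if "n \<in> A" for n
  proof -
    have z1: "norm (complex_of_real (b / real n)) < 1" using zsmall[OF that] by linarith
    have "summable (\<lambda>k. norm (hs a 0 s n) * norm (((-s) gchoose Suc k) * (complex_of_real (b / real n)) ^ Suc k))"
      by (rule summable_mult[OF inner_abs[OF z1]])
    then have "summable (\<lambda>k. norm (F (n,k)))" unfolding F_def by (simp only: norm_mult case_prod_conv)
    then show ?thesis by (subst summable_on_UNIV_nonneg_real_iff) auto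
  qed
  have absF: "(\<lambda>p. norm (F p)) summable_on (A \<times> UNIV)"
  proof (subst Infinite_Sum.abs_summable_on_Sigma_iff, intro conjI ballI)
    fix n assume "n \<in> A" then show "(\<lambda>k. norm (F (n,k))) summable_on UNIV" by (rule inner_abs')
  next
    have g: "(\<lambda>n. norm (hs a 0 s n) * Bc) summable_on A"
      using hs_abs_summable[OF a _ n0 s, of 0] unfolding A_def by (intro summable_on_cmult_left) auto
    have le: "norm (infsum (\<lambda>k. norm (F (n,k))) UNIV) \<le> norm (hs a 0 s n) * Bc" if "n \<in> A" for n
    proof -
      have "norm (infsum (\<lambda>k. norm (F (n,k))) UNIV) = infsum (\<lambda>k. norm (F (n,k))) UNIV"
        by (simp add: infsum_nonneg)
      also have "\<dots> \<le> infsum (\<lambda>k. norm (hs a 0 s n) * norm (((-s) gchoose Suc k) * (1/2::complex) ^ Suc k)) UNIV"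
        by (rule infsum_mono[OF inner_abs'[OF that] summable_on_cmult_right[OF Bsum]]) (rule bound_k[OF that])
      also have "\<dots> = norm (hs a 0 s n) * Bc"
        unfolding Bc_def by (rule infsum_cmult_right) (use Bsum in auto)
      finally show ?thesis .
    qed
    show "(\<lambda>n. norm (infsum (\<lambda>k. norm (F (n,k))) UNIV)) summable_on A"
      by (rule Infinite_Sum.abs_summable_on_comparison_test'[OF g le])
  qed
  have Fsum: "F summable_on (A \<times> UNIV)"
    using absF by (simp add: summable_on_iff_abs_summable_on_complex)
  define S where "S = infsum F (A \<times> UNIV)"
  have FS: "(F has_sum S) (A \<times> UNIV)" unfolding S_def using Fsum by simp
  have "(gt a b s has_sum S) A"
    by (rule has_sum_SigmaD[OF FS]) (use Fn in auto)
  moreover have "(gt a b s has_sum (HH a n0 b s - HH a n0 0 s)) A"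
    unfolding gt_def A_def by (rule has_sum_diff') (use HH_has_sum a b n0 s in auto)
  ultimately have S_eq: "S = HH a n0 b s - HH a n0 0 s" by (rule has_sum_unique)
  have FS': "((\<lambda>(k,n). F (n,k)) has_sum S) (UNIV \<times> A)"
    using FS by (subst (asm) has_sum_swap) simp
  define g where "g = (\<lambda>k. ((-s) gchoose Suc k) * complex_of_real b ^ Suc k * dser a n0 (s + of_nat (Suc k)))"
  have gk: "((\<lambda>n. F (n,k)) has_sum g k) A" for k
  proof -
    have Rk: "2 < Re (s + of_nat (Suc k))" using s by simp
    have h: "(hs a 0 (s + of_nat (Suc k)) has_sum dser a n0 (s + of_nat (Suc k))) A"
      unfolding A_def dser_HH[OF a n0 Rk] using HH_has_sum[OF a _ n0 Rk, of 0] by simp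
    have h2: "((\<lambda>n. (((-s) gchoose Suc k) * complex_of_real b ^ Suc k) * hs a 0 (s + of_nat (Suc k)) n) has_sum g k) A"
      unfolding g_def by (rule has_sum_cmult_right[OF h])
    have e: "F (n,k) = (((-s) gchoose Suc k) * complex_of_real b ^ Suc k) * hs a 0 (s + of_nat (Suc k)) n"
      if "n \<in> A" for n
    proof -
      have n1: "n \<ge> 1" using that n0 by (simp add: A_def)
      show ?thesis unfolding F_def using hs_shift_nat[OF n1, of a s "Suc k"] n1
        by (simp add: power_divide field_simps)
    qed
    show ?thesis using h2 by (subst has_sum_cong_neutral[where T=A]) (use e in auto)
  qed
  have "(g has_sum S) UNIV"
    by (rule has_sum_SigmaD[OF FS']) (use gk in auto)
  then have "g sums S" by (rule has_sum_imp_sums)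
  then have "Sig s (of_real b) (dser a n0) = S" unfolding Sig_def g_def by (simp add: sums_iff)
  then show ?thesis using S_eq by simp
qed


lemma ln_small: fixes x :: real assumes "\<bar>x\<bar> \<le> 1/2" shows "\<bar>ln (1 + x)\<bar> \<le> 2 * \<bar>x\<bar>"
proof -
  have "\<bar>ln (1 + x) - x\<bar> \<le> 2 * x\<^sup>2" by (rule abs_ln_one_plus_x_minus_x_bound[OF assms])
  moreover have "2 * x\<^sup>2 \<le> \<bar>x\<bar>"
  proof -
    have "2 * x\<^sup>2 = (2 * \<bar>x\<bar>) * \<bar>x\<bar>" by (simp add: power2_eq_square abs_mult_self)
    also have "\<dots> \<le> 1 * \<bar>x\<bar>" using assms by (intro mult_right_mono) auto
    finally show ?thesis by simp
  qed
  ultimately show ?thesis by linarith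
qed

lemma gt_bound:
  assumes a: "bnd a" and b: "\<bar>b\<bar> \<le> 1" and n: "real n \<ge> 2" "real n \<ge> 4 * R"
    and s: "\<sigma> \<le> Re s" "0 \<le> \<sigma>" "norm s \<le> R"
  shows "norm (gt a b s n) \<le> 9 * R * real n powr (- \<sigma>)"
proof -
  define x where "x = b / real n"
  have x: "\<bar>x\<bar> \<le> 1/2" using b n by (simp add: x_def abs_div field_simps)
  have x1: "1 + x > 0" using x by (simp add: abs_le_iff)
  define w where "w = - s * complex_of_real (ln (1 + x))"
  have R0: "R \<ge> 0" using s(3) norm_ge_zero order_trans by blast
  have nw: "norm w \<le> R * (2 * \<bar>x\<bar>)"
    unfolding w_def norm_mult norm_minus_cancel norm_of_real
    by (intro mult_mono ln_small x s(3) R0) auto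
  have xn: "\<bar>x\<bar> \<le> \<bar>b\<bar> / real n" using n by (simp add: x_def abs_div)
  have "R * (2 * \<bar>x\<bar>) \<le> R * (2 / real n)"
  proof -
    have "\<bar>b\<bar> / real n \<le> 1 / real n" using b n by (intro divide_right_mono) auto
    then show ?thesis using xn R0 by (intro mult_left_mono) auto
  qed
  moreover have "R * (2 / real n) = 2 * R / real n" by simp
  ultimately have nw2: "norm w \<le> 2 * R / real n" using nw by linarith
  have "2 * R / real n \<le> 1/2" using n R0 by (simp add: field_simps)
  then have "norm w \<le> 1/2" using nw2 by linarith
  then have ew: "norm (exp w - 1) \<le> 3/2 * norm w" by (rule norm_exp_bounds(2))
  have pw: "(1 + complex_of_real x) powr (-s) = exp w"
  proof -
    have e1: "1 + complex_of_real x = complex_of_real (1 + x)" by simp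
    have L: "ln (complex_of_real (1 + x)) = complex_of_real (ln (1 + x))" by (rule Ln_of_real[OF x1])
    have nz: "complex_of_real (1 + x) \<noteq> 0" using x1 by (simp del: of_real_add)
    show ?thesis unfolding e1 w_def powr_def L using nz by (simp del: of_real_add)
  qed
  have gt_eq: "gt a b s n = of_nat (a n) * of_nat n powr (-s) * (exp w - 1)"
    unfolding gt_def hs_def using powr_shift_real[OF n(1) b, of s] pw
    by (simp add: x_def algebra_simps)
  have an: "real (a n) \<le> 3 * real n" using a_bound[OF a, of n] n by simp
  have npow: "norm (complex_of_nat n powr (-s)) \<le> real n powr (- \<sigma>)"
  proof -
    have "norm (complex_of_nat n powr (-s)) = real n powr (- Re s)"
      using norm_ofreal_powr[of "real n" "-s"] by simp
    also have "\<dots> \<le> real n powr (- \<sigma>)" using n s by (intro powr_mono) auto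
    finally show ?thesis .
  qed
  have "norm (gt a b s n) = real (a n) * norm (complex_of_nat n powr (-s)) * norm (exp w - 1)"
    unfolding gt_eq by (simp add: norm_mult)
  also have "\<dots> \<le> (3 * real n) * real n powr (- \<sigma>) * (3/2 * (2 * R / real n))"
    using an npow ew nw2 by (intro mult_mono) auto
  also have "\<dots> = 9 * R * real n powr (- \<sigma>)" using n by (simp add: field_simps)
  finally show ?thesis .
qed

lemma Gd_analytic:
  assumes a: "bnd a" and b: "\<bar>b\<bar> \<le> 1" and n0: "n0 \<ge> 2"
  shows "Gd a n0 b analytic_on {s. 1 < Re s}"
proof -
  define S where "S = {s::complex. 1 < Re s}"
  have oS: "open S" unfolding S_def by (rule open_halfspace_Re_gt)
  define f where "f = (\<lambda>i s. if n0 \<le> i then gt a b s i else 0)"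
  have Gd_eq: "Gd a n0 b = (\<lambda>s. suminf (\<lambda>i. f i s))"
    by (simp add: fun_eq_iff Gd_def f_def)
  have hol_i: "(\<lambda>s. f i s) holomorphic_on S" for i
  proof (cases "n0 \<le> i")
    case True
    then show ?thesis unfolding f_def gt_def hs_def by (simp, intro holomorphic_intros)
  qed (simp add: f_def)
  have "Gd a n0 b holomorphic_on S"
    unfolding Gd_eq
  proof (rule holomorphic_uniform_sequence[OF oS])
    show "(\<lambda>s. \<Sum>i<N. f i s) holomorphic_on S" for N
      by (intro holomorphic_on_sum hol_i)
  next
    fix x assume x: "x \<in> S"
    define d where "d = (Re x - 1) / 2"
    have d0: "d > 0" using x by (simp add: S_def d_def)
    define \<sigma> where "\<sigma> = Re x - d"
    have sig: "\<sigma> > 1" using x by (simp add: S_def \<sigma>_def d_def field_simps)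
    define R where "R = norm x + d"
    have inS: "Re y \<ge> \<sigma> \<and> norm y \<le> R" if "y \<in> cball x d" for y
    proof -
      have dy: "norm (y - x) \<le> d" using that by (simp add: dist_norm norm_minus_commute)
      have "\<bar>Re (y - x)\<bar> \<le> norm (y - x)" by (rule abs_Re_le_cmod)
      then have "Re y \<ge> \<sigma>" using dy by (simp add: \<sigma>_def abs_le_iff)
      moreover have "norm y \<le> R" using norm_triangle_ineq[of x "y - x"] dy by (simp add: R_def)
      ultimately show ?thesis by simp
    qed
    have sub: "cball x d \<subseteq> S" using inS sig by (force simp: S_def)
    define M where "M = (\<lambda>n::nat. 9 * R * real n powr (- \<sigma>))"
    have Msum: "summable M" unfolding M_def
      using sig by (intro summable_mult) (simp add: summable_real_powr_iff)
    have ev: "\<forall>\<^sub>F n in sequentially. \<forall>y\<in>cball x d. norm (f n y) \<le> M n"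
    proof -
      obtain N :: nat where N: "max 2 (4*R) \<le> real N" using real_arch_simple by blast
      have "\<forall>\<^sub>F n in sequentially. real n \<ge> max 2 (4 * R)"
        by (rule eventually_mono[OF eventually_ge_at_top[of N]]) (use N in \<open>auto dest: of_nat_mono[where ?'a=real]\<close>)
      then show ?thesis
      proof (rule eventually_mono, intro ballI)
        fix n y assume n: "real n \<ge> max 2 (4 * R)" and y: "y \<in> cball x d"
        have R0: "R \<ge> 0" using d0 by (simp add: R_def)
        have "0 \<le> M n" unfolding M_def using R0 by simp
        moreover have "norm (gt a b y n) \<le> M n"
          unfolding M_def using inS[OF y] n sig by (intro gt_bound[OF a b]) auto
        ultimately show "norm (f n y) \<le> M n" by (simp add: f_def)
      qed
    qed
    show "\<exists>d>0. cball x d \<subseteq> S \<and> uniform_limit (cball x d) (\<lambda>N s. \<Sum>i<N. f i s) (\<lambda>s. \<Sum>i. f i s) sequentially"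
      using d0 sub Weierstrass_m_test_ev[OF ev Msum] by blast
  qed
  then show ?thesis using oS by (simp add: analytic_on_open S_def)
qed


lemma split_evod:
  fixes f :: "nat \<Rightarrow> complex"
  assumes "((\<lambda>m. f (2*m)) has_sum A) {n0..}" "((\<lambda>m. f (2*m+1)) has_sum B) {n0..}"
  shows "(f has_sum (sum f {n0..<2*n0} + A + B)) {n0..}"
proof -
  have eA: "(f has_sum A) ((\<lambda>m. 2*m) ` {n0..})"
    using assms(1) by (subst has_sum_reindex) (auto simp: inj_on_def o_def)
  have eB: "(f has_sum B) ((\<lambda>m. 2*m+1) ` {n0..})"
    using assms(2) by (subst has_sum_reindex) (auto simp: inj_on_def o_def)
  have d1: "(\<lambda>m. 2*m) ` {n0..} \<inter> (\<lambda>m. 2*m+1) ` {n0..} = {}"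
  proof -
    have "2*a \<noteq> 2*c+(1::nat)" for a c by presburger
    then show ?thesis by auto
  qed
  have AB: "(f has_sum (A + B)) ((\<lambda>m. 2*m) ` {n0..} \<union> (\<lambda>m. 2*m+1) ` {n0..})"
    by (rule has_sum_Un_disjoint[OF eA eB d1])
  have d2: "{n0..<2*n0} \<inter> ((\<lambda>m. 2*m) ` {n0..} \<union> (\<lambda>m. 2*m+1) ` {n0..}) = {}" by auto
  have F: "(f has_sum sum f {n0..<2*n0}) {n0..<2*n0}" by (rule has_sum_finite) simp
  have U: "{n0..<2*n0} \<union> ((\<lambda>m. 2*m) ` {n0..} \<union> (\<lambda>m. 2*m+1) ` {n0..}) = {n0..}"
  proof (intro equalityI subsetI)
    fix n assume "n \<in> {n0..}"
    then have n: "n0 \<le> n" by simp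
    show "n \<in> {n0..<2*n0} \<union> ((\<lambda>m. 2*m) ` {n0..} \<union> (\<lambda>m. 2*m+1) ` {n0..})"
    proof (cases "n < 2*n0")
      case True then show ?thesis using n by auto
    next
      case False
      show ?thesis
      proof (cases "even n")
        case True
        then obtain m where "n = 2*m" by blast
        then show ?thesis using False by (auto simp: image_iff)
      next
        case odd: False
        then obtain m where "n = 2*m+1" using oddE by blast
        then show ?thesis using False by (auto simp: image_iff)
      qed
    qed
  qed auto
  show ?thesis using has_sum_Un_disjoint[OF F AB d2] unfolding U by (simp add: add.assoc)
qed

lemma shift_up:
  fixes f :: "nat \<Rightarrow> complex"
  assumes "(f has_sum S) {n0..}"
  shows "((\<lambda>m. f (m+1)) has_sum (S - f n0)) {n0..}"
proof -
  have sm: "f summable_on {n0..}" using assms summable_on_def by blast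
  have "f summable_on {Suc n0..}" by (rule summable_on_subset_banach[OF sm]) auto
  then have T: "(f has_sum infsum f {Suc n0..}) {Suc n0..}" by (rule has_sum_infsum)
  have "(f has_sum (f n0 + infsum f {Suc n0..})) (insert n0 {Suc n0..})"
    by (rule has_sum_insert[OF _ T]) simp
  moreover have "insert n0 {Suc n0..} = {n0..}" by auto
  ultimately have "(f has_sum (f n0 + infsum f {Suc n0..})) {n0..}" by simp
  then have e: "f n0 + infsum f {Suc n0..} = S" using assms by (rule has_sum_unique)
  have im: "Suc ` {n0..} = {Suc n0..}"
  proof (intro equalityI subsetI)
    fix k assume "k \<in> {Suc n0..}"
    then show "k \<in> Suc ` {n0..}" by (intro image_eqI[of _ _ "k - 1"]) auto
  qed auto
  have "infsum f {Suc n0..} = S - f n0" using e by (simp add: algebra_simps)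
  then have T': "(f has_sum (S - f n0)) (Suc ` {n0..})" using T unfolding im by simp
  have inj: "inj_on Suc {n0..}" by simp
  have "((f \<circ> Suc) has_sum (S - f n0)) {n0..}" using T' has_sum_reindex[OF inj] by blast
  then show ?thesis by (simp add: o_def)
qed

lemma shift_down:
  fixes f :: "nat \<Rightarrow> complex"
  assumes "(f has_sum S) {n0..}" "n0 \<ge> 1"
  shows "((\<lambda>m. f (m-1)) has_sum (f (n0-1) + S)) {n0..}"
proof -
  have "(f has_sum (f (n0-1) + S)) (insert (n0-1) {n0..})"
    by (rule has_sum_insert[OF _ assms(1)]) (use assms(2) in auto)
  moreover have "insert (n0-1) {n0..} = (\<lambda>m. m-1) ` {n0..}"
  proof (intro equalityI subsetI)
    fix k assume "k \<in> insert (n0-1) {n0..}"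
    then have "k = (k+1) - 1 \<and> k+1 \<in> {n0..}" using assms(2) by auto
    then show "k \<in> (\<lambda>m. m-1) ` {n0..}" by blast
  qed auto
  ultimately have T: "(f has_sum (f (n0-1) + S)) ((\<lambda>m. m-1) ` {n0..})" by simp
  have inj: "inj_on (\<lambda>m. m-1) {n0..}" using assms(2) by (auto simp: inj_on_def)
  have "((f \<circ> (\<lambda>m. m-1)) has_sum (f (n0-1) + S)) {n0..}" using T has_sum_reindex[OF inj] by blast
  then show ?thesis by (simp add: o_def)
qed

lemma powr_dbl:
  assumes "t = 2 * u" "u \<ge> 0"
  shows "complex_of_real t powr (-s) = 2 powr (-s) * complex_of_real u powr (-s)"
proof -
  have "complex_of_real t = of_real 2 * of_real u" using assms by simp
  also have "\<dots> powr (-s) = of_real 2 powr (-s) * of_real u powr (-s)"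
    by (rule powr_times_real) (use assms in auto)
  finally show ?thesis by simp
qed

lemma has_sum_cong_on:
  fixes f g :: "nat \<Rightarrow> complex"
  assumes "\<And>m. m \<in> A \<Longrightarrow> f m = g m" "(g has_sum S) A"
  shows "(f has_sum S) A"
proof -
  have "(f has_sum S) A \<longleftrightarrow> (g has_sum S) A" by (rule has_sum_cong_neutral) (use assms(1) in auto)
  then show ?thesis using assms(2) by simp
qed

lemma hs_even: "complex_of_real (real (2*m) + 0) powr (-s) = 2 powr (-s) * complex_of_real (real m + 0) powr (-s)"
  by (rule powr_dbl) auto
lemma hs_odd: "complex_of_real (real (2*m+1) + 0) powr (-s) = 2 powr (-s) * complex_of_real (real (m+1) + (-1/2)) powr (-s)"
  by (rule powr_dbl) auto
lemma hs_odd2: "complex_of_real (real (2*m+1) + 0) powr (-s) = 2 powr (-s) * complex_of_real (real m + 1/2) powr (-s)"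
  by (rule powr_dbl) auto
lemma hs_even1: "m \<ge> 1 \<Longrightarrow> complex_of_real (real (2*m) + 0) powr (-s) = 2 powr (-s) * complex_of_real (real (m-1) + 1) powr (-s)"
  by (rule powr_dbl) (auto simp: of_nat_diff)
lemma half_shift: "real (m+1) + (-1/2) = real m + 1/2" by simp

lemma eqs:
  fixes x y z :: "nat \<Rightarrow> nat"
  assumes bx: "bnd x" and by': "bnd y" and bz: "bnd z" and n0: "n0 \<ge> 2" and s: "2 < Re s"
    and r1: "\<And>n. x (2*n) = x n + z n" and r2: "\<And>n. x (2*n+1) = y (n+1)"
    and r3: "\<And>n. n \<ge> 1 \<Longrightarrow> y (2*n) = z n + x (n-1)" and r4: "\<And>n. y (2*n+1) = z n + x (n+1)"
    and r5: "\<And>n. z (2*n) = 2 * x n" and r6: "\<And>n. z (2*n+1) = 2 * y (n+1)"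
  shows "HH x n0 0 s = sum (hs x 0 s) {n0..<2*n0} + 2 powr (-s) * (HH x n0 0 s + HH z n0 0 s)
            + 2 powr (-s) * (HH y n0 (-1/2) s - hs y (-1/2) s n0)" (is ?E1)
    and "HH y n0 0 s = sum (hs y 0 s) {n0..<2*n0} + 2 powr (-s) * (HH z n0 0 s + (hs x 1 s (n0-1) + HH x n0 1 s))
            + 2 powr (-s) * (HH z n0 (1/2) s + (HH x n0 (-1/2) s - hs x (-1/2) s n0))" (is ?E2)
    and "HH z n0 0 s = sum (hs z 0 s) {n0..<2*n0} + 2 powr (-s) * (2 * HH x n0 0 s)
            + 2 powr (-s) * (2 * (HH y n0 (-1/2) s - hs y (-1/2) s n0))" (is ?E3)
proof -
  have Hx0: "(hs x 0 s has_sum HH x n0 0 s) {n0..}" using HH_has_sum[OF bx _ n0 s] by simp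
  have Hy0: "(hs y 0 s has_sum HH y n0 0 s) {n0..}" using HH_has_sum[OF by' _ n0 s] by simp
  have Hz0: "(hs z 0 s has_sum HH z n0 0 s) {n0..}" using HH_has_sum[OF bz _ n0 s] by simp
  have Hx1: "(hs x 1 s has_sum HH x n0 1 s) {n0..}" using HH_has_sum[OF bx _ n0 s] by simp
  have Hxm: "(hs x (-1/2) s has_sum HH x n0 (-1/2) s) {n0..}" using HH_has_sum[OF bx _ n0 s] by simp
  have Hym: "(hs y (-1/2) s has_sum HH y n0 (-1/2) s) {n0..}" using HH_has_sum[OF by' _ n0 s] by simp
  have Hzp: "(hs z (1/2) s has_sum HH z n0 (1/2) s) {n0..}" using HH_has_sum[OF bz _ n0 s] by simp
  let ?c = "(2::complex) powr (-s)"
  have e1: "((\<lambda>m. hs x 0 s (2*m)) has_sum ?c * (HH x n0 0 s + HH z n0 0 s)) {n0..}"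
    by (rule has_sum_cong_on[OF _ has_sum_cmult_right[OF has_sum_add[OF Hx0 Hz0]]])
       (simp only: hs_def r1 hs_even, simp add: algebra_simps)
  have o1: "((\<lambda>m. hs x 0 s (2*m+1)) has_sum ?c * (HH y n0 (-1/2) s - hs y (-1/2) s n0)) {n0..}"
    by (rule has_sum_cong_on[OF _ has_sum_cmult_right[OF shift_up[OF Hym]]])
       (simp only: hs_def r2 hs_odd, simp add: algebra_simps)
  show ?E1 by (rule has_sum_unique[OF Hx0 split_evod[OF e1 o1]])
  have sd: "((\<lambda>m. hs x 1 s (m-1)) has_sum (hs x 1 s (n0-1) + HH x n0 1 s)) {n0..}"
    by (rule shift_down[OF Hx1]) (use n0 in simp)
  have e2: "((\<lambda>m. hs y 0 s (2*m)) has_sum ?c * (HH z n0 0 s + (hs x 1 s (n0-1) + HH x n0 1 s))) {n0..}"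
  proof (rule has_sum_cong_on[OF _ has_sum_cmult_right[OF has_sum_add[OF Hz0 sd]]])
    fix m assume "m \<in> {n0..}"
    then have m1: "m \<ge> 1" using n0 by simp
    show "hs y 0 s (2*m) = ?c * (hs z 0 s m + hs x 1 s (m-1))"
    proof -
      have q: "real (m-1) + 1 = real m + 0" using m1 by (simp add: of_nat_diff)
      show ?thesis by (simp only: hs_def r3[OF m1] hs_even1[OF m1] q, simp add: algebra_simps)
    qed
  qed
  have o2: "((\<lambda>m. hs y 0 s (2*m+1)) has_sum ?c * (HH z n0 (1/2) s + (HH x n0 (-1/2) s - hs x (-1/2) s n0))) {n0..}"
    by (rule has_sum_cong_on[OF _ has_sum_cmult_right[OF has_sum_add[OF Hzp shift_up[OF Hxm]]]])
       (simp only: hs_def r4 hs_odd2 half_shift, simp add: algebra_simps)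
  show ?E2 by (rule has_sum_unique[OF Hy0 split_evod[OF e2 o2]])
  have e3: "((\<lambda>m. hs z 0 s (2*m)) has_sum ?c * (2 * HH x n0 0 s)) {n0..}"
    by (rule has_sum_cong_on[OF _ has_sum_cmult_right[OF has_sum_cmult_right[OF Hx0]]])
       (simp only: hs_def r5 hs_even, simp add: algebra_simps)
  have o3: "((\<lambda>m. hs z 0 s (2*m+1)) has_sum ?c * (2 * (HH y n0 (-1/2) s - hs y (-1/2) s n0))) {n0..}"
    by (rule has_sum_cong_on[OF _ has_sum_cmult_right[OF has_sum_cmult_right[OF shift_up[OF Hym]]]])
       (simp only: hs_def r6 hs_odd, simp add: algebra_simps)
  show ?E3 by (rule has_sum_unique[OF Hz0 split_evod[OF e3 o3]])
qed


lemma kappa_lt2: "kappa < 2"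
proof -
  have "sqrt 17 < 5" by (simp add: real_less_lsqrt)
  then have "3 + sqrt 17 < 2 powr 3" by simp
  then have "log 2 (3 + sqrt 17) < 3"
    by (subst log_less_iff) (auto intro: add_pos_nonneg)
  then show ?thesis by (simp add: kappa_def)
qed

lemma powr_1m: "(2::complex) powr (1 - s) = 2 * 2 powr (-s)"
proof -
  have "(2::complex) powr (1 + (-s)) = 2 powr 1 * 2 powr (-s)" by (rule powr_add)
  then show ?thesis by simp
qed

lemma term_half:
  assumes "n0 \<ge> 2"
  shows "of_nat (a n0) / of_nat (2*n0 - 1) powr s = 2 powr (-s) * hs a (-1/2) s n0"
proof -
  have p: "complex_of_real (real (2*n0-1)) powr (-s) = 2 powr (-s) * complex_of_real (real n0 + (-1/2)) powr (-s)"
    by (rule powr_dbl) (use assms in \<open>auto simp: of_nat_diff\<close>)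
  have e2: "(of_nat (2*n0-1)::complex) = complex_of_real (real (2*n0-1))" by (rule of_real_of_nat_eq[symmetric])
  have "of_nat (a n0) / of_nat (2*n0 - 1) powr s = of_nat (a n0) * of_nat (2*n0 - 1) powr (-s)"
    by (simp only: powr_minus divide_inverse)
  also have "\<dots> = 2 powr (-s) * hs a (-1/2) s n0"
    unfolding e2 p hs_def by (simp only: mult_ac)
  finally show ?thesis .
qed

lemma term_one:
  assumes "n0 \<ge> 2"
  shows "of_nat (a (n0-1)) / of_nat (2*n0) powr s = 2 powr (-s) * hs a 1 s (n0-1)"
proof -
  have p: "complex_of_real (real (2*n0)) powr (-s) = 2 powr (-s) * complex_of_real (real (n0-1) + 1) powr (-s)"
    by (rule powr_dbl) (use assms in \<open>auto simp: of_nat_diff\<close>)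
  have e2: "(of_nat (2*n0)::complex) = complex_of_real (real (2*n0))" by (rule of_real_of_nat_eq[symmetric])
  have "of_nat (a (n0-1)) / of_nat (2*n0) powr s = of_nat (a (n0-1)) * of_nat (2*n0) powr (-s)"
    by (simp only: powr_minus divide_inverse)
  also have "\<dots> = 2 powr (-s) * hs a 1 s (n0-1)"
    unfolding e2 p hs_def by (simp only: mult_ac)
  finally show ?thesis .
qed

lemma fin_eq:
  assumes "n0 \<ge> 2"
  shows "(\<Sum>n\<in>{n0..<2*n0}. of_nat (a n) / of_nat n powr s) = sum (hs a 0 s) {n0..<2*n0}"
proof (rule sum.cong[OF refl])
  fix n assume "n \<in> {n0..<2*n0}"
  then have "n \<ge> 1" using assms by simp
  then show "of_nat (a n) / of_nat n powr s = hs a 0 s n" by (rule hs0[symmetric])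
qed


lemma main_generic:
  fixes x y z :: "nat \<Rightarrow> nat" and n0 :: nat
  assumes bx: "bnd x" and by': "bnd y" and bz: "bnd z" and n0: "n0 \<ge> 2"
    and r1: "\<And>n. x (2*n) = x n + z n" and r2: "\<And>n. x (2*n+1) = y (n+1)"
    and r3: "\<And>n. n \<ge> 1 \<Longrightarrow> y (2*n) = z n + x (n-1)" and r4: "\<And>n. y (2*n+1) = z n + x (n+1)"
    and r5: "\<And>n. z (2*n) = 2 * x n" and r6: "\<And>n. z (2*n+1) = 2 * y (n+1)"
  defines "X \<equiv> dser x n0" and "Y \<equiv> dser y n0" and "Z \<equiv> dser z n0"
  shows "(\<forall>s::complex. 2 < Re s \<longrightarrow>
            X s - 2 powr (-s) * X s - 2 powr (-s) * Y s - 2 powr (-s) * Z s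
              = 2 powr (-s) * Sig s (-1/2) Y - of_nat (y n0) / of_nat (2*n0 - 1) powr s
                + (\<Sum>n\<in>{n0..<2*n0}. of_nat (x n) / of_nat n powr s)
          \<and> Y s - 2 powr (1-s) * X s - 2 powr (1-s) * Z s
              = 2 powr (-s) * Sig s 1 X + 2 powr (-s) * Sig s (-1/2) X + 2 powr (-s) * Sig s (1/2) Z
                + of_nat (x (n0 - 1)) / of_nat (2*n0) powr s - of_nat (x n0) / of_nat (2*n0 - 1) powr s
                + (\<Sum>n\<in>{n0..<2*n0}. of_nat (y n) / of_nat n powr s)
          \<and> Z s - 2 powr (1-s) * X s - 2 powr (1-s) * Y s
              = 2 powr (1-s) * Sig s (-1/2) Y - 2 * of_nat (y n0) / of_nat (2*n0 - 1) powr s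
                + (\<Sum>n\<in>{n0..<2*n0}. of_nat (z n) / of_nat n powr s))
       \<and> (\<exists>F. good_continuation X F) \<and> (\<exists>G. good_continuation Y G) \<and> (\<exists>H. good_continuation Z H)"
proof -
  have SigG: "Sig s (of_real b) (dser a n0) = Gd a n0 b s"
    if "bnd a" "\<bar>b\<bar> \<le> 1" "2 < Re s" for a b s
    using Sig_eq[OF that(1,2) n0 that(3)] Gd_HH[OF that(1,2) n0 that(3)] by simp
  have part1: "X s - 2 powr (-s) * X s - 2 powr (-s) * Y s - 2 powr (-s) * Z s
              = 2 powr (-s) * Sig s (-1/2) Y - of_nat (y n0) / of_nat (2*n0 - 1) powr s
                + (\<Sum>n\<in>{n0..<2*n0}. of_nat (x n) / of_nat n powr s)
          \<and> Y s - 2 powr (1-s) * X s - 2 powr (1-s) * Z s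
              = 2 powr (-s) * Sig s 1 X + 2 powr (-s) * Sig s (-1/2) X + 2 powr (-s) * Sig s (1/2) Z
                + of_nat (x (n0 - 1)) / of_nat (2*n0) powr s - of_nat (x n0) / of_nat (2*n0 - 1) powr s
                + (\<Sum>n\<in>{n0..<2*n0}. of_nat (y n) / of_nat n powr s)
          \<and> Z s - 2 powr (1-s) * X s - 2 powr (1-s) * Y s
              = 2 powr (1-s) * Sig s (-1/2) Y - 2 * of_nat (y n0) / of_nat (2*n0 - 1) powr s
                + (\<Sum>n\<in>{n0..<2*n0}. of_nat (z n) / of_nat n powr s)"
    if s: "2 < Re s" for s :: complex
  proof -
    note E = eqs[OF bx by' bz n0 s r1 r2 r3 r4 r5 r6]
    have dX: "X s = HH x n0 0 s" unfolding X_def by (rule dser_HH[OF bx n0 s])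
    have dY: "Y s = HH y n0 0 s" unfolding Y_def by (rule dser_HH[OF by' n0 s])
    have dZ: "Z s = HH z n0 0 s" unfolding Z_def by (rule dser_HH[OF bz n0 s])
    have SYm: "Sig s (-1/2) Y = HH y n0 (-1/2) s - HH y n0 0 s"
      using Sig_eq[OF by' _ n0 s, of "-1/2"] unfolding Y_def by simp
    have SXm: "Sig s (-1/2) X = HH x n0 (-1/2) s - HH x n0 0 s"
      using Sig_eq[OF bx _ n0 s, of "-1/2"] unfolding X_def by simp
    have SX1: "Sig s 1 X = HH x n0 1 s - HH x n0 0 s"
      using Sig_eq[OF bx _ n0 s, of 1] unfolding X_def by simp
    have SZp: "Sig s (1/2) Z = HH z n0 (1/2) s - HH z n0 0 s"
      using Sig_eq[OF bz _ n0 s, of "1/2"] unfolding Z_def by simp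
    note T = term_half[OF n0, of y s] term_half[OF n0, of x s] term_one[OF n0, of x s]
      fin_eq[OF n0, of x s] fin_eq[OF n0, of y s] fin_eq[OF n0, of z s] powr_1m[of s]
    have t2: "2 * of_nat (y n0) / of_nat (2*n0 - 1) powr s = 2 * (of_nat (y n0) / of_nat (2*n0 - 1) powr s)"
      by simp
    show ?thesis unfolding t2 T dX dY dZ SYm SXm SX1 SZp using E by algebra
  qed
  define c where "c = uu"
  define fx where "fx = (\<lambda>s::complex. (\<Sum>n\<in>{n0..<2*n0}. of_nat (x n) / of_nat n powr s))"
  define fy where "fy = (\<lambda>s::complex. (\<Sum>n\<in>{n0..<2*n0}. of_nat (y n) / of_nat n powr s))"
  define fz where "fz = (\<lambda>s::complex. (\<Sum>n\<in>{n0..<2*n0}. of_nat (z n) / of_nat n powr s))"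
  define ty where "ty = (\<lambda>s::complex. of_nat (y n0) / of_nat (2*n0 - 1) powr s)"
  define tx where "tx = (\<lambda>s::complex. of_nat (x n0) / of_nat (2*n0 - 1) powr s)"
  define tx1 where "tx1 = (\<lambda>s::complex. of_nat (x (n0-1)) / of_nat (2*n0) powr s)"
  define Jh where "Jh = (\<lambda>s. uu s * Gd y n0 (-1/2) s - ty s + fx s)"
  define Kh where "Kh = (\<lambda>s. uu s * Gd x n0 1 s + uu s * Gd x n0 (-1/2) s + uu s * Gd z n0 (1/2) s + tx1 s - tx s + fy s)"
  define Lh where "Lh = (\<lambda>s. 2 * uu s * Gd y n0 (-1/2) s - 2 * ty s + fz s)"
  have sys: "X s - uu s * X s - uu s * Y s - uu s * Z s = Jh s
           \<and> Y s - 2 * uu s * X s - 2 * uu s * Z s = Kh s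
           \<and> Z s - 2 * uu s * X s - 2 * uu s * Y s = Lh s" if s: "2 < Re s" for s
  proof -
    have G1: "Gd y n0 (-1/2) s = Sig s (-1/2) Y" using SigG[OF by' _ s, of "-1/2"] by (simp add: Y_def)
    have G2: "Gd x n0 (-1/2) s = Sig s (-1/2) X" using SigG[OF bx _ s, of "-1/2"] by (simp add: X_def)
    have G3: "Gd x n0 1 s = Sig s 1 X" using SigG[OF bx _ s, of 1] by (simp add: X_def)
    have G4: "Gd z n0 (1/2) s = Sig s (1/2) Z" using SigG[OF bz _ s, of "1/2"] by (simp add: Z_def)
    have t2: "2 * of_nat (y n0) / of_nat (2*n0 - 1) powr s = 2 * (of_nat (y n0) / of_nat (2*n0 - 1) powr s)"
      by simp
    show ?thesis using part1[OF s] unfolding Jh_def Kh_def Lh_def G1 G2 G3 G4 fx_def fy_def fz_def ty_def tx_def tx1_def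
        uu_def powr_1m t2 by (simp add: algebra_simps)
  qed
  define \<Omega> where "\<Omega> = {s::complex. 1 < Re s}"
  have oO: "open \<Omega>" unfolding \<Omega>_def by (rule open_halfspace_Re_gt)
  have hGd: "Gd a n0 b holomorphic_on \<Omega>" if "bnd a" "\<bar>b\<bar> \<le> 1" for a b
    using Gd_analytic[OF that n0] unfolding \<Omega>_def by (rule analytic_imp_holomorphic)
  have huu: "uu holomorphic_on \<Omega>"
  proof -
    have "(\<lambda>s. (2::complex) powr (-s)) holomorphic_on \<Omega>" by (intro holomorphic_intros)
    then show ?thesis by (simp add: uu_def[abs_def])
  qed
  have hdiv: "(\<lambda>s. of_nat k / of_nat m powr s) holomorphic_on \<Omega>" if "m \<ge> 1" for k m :: nat
    using that by (intro holomorphic_intros) auto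
  have hfin: "(\<lambda>s. (\<Sum>n\<in>{n0..<2*n0}. of_nat (a n) / of_nat n powr s)) holomorphic_on \<Omega>" for a :: "nat \<Rightarrow> nat"
    by (intro holomorphic_on_sum hdiv) (use n0 in auto)
  have hJ: "Jh holomorphic_on \<Omega>" unfolding Jh_def ty_def fx_def
    using hGd[OF by', of "-1/2"] huu hdiv[of "2*n0-1" "y n0"] hfin[of x] n0
    by (intro holomorphic_intros) auto
  have hK: "Kh holomorphic_on \<Omega>" unfolding Kh_def tx1_def tx_def fy_def
    using hGd[OF bx, of "-1/2"] hGd[OF bx, of 1] hGd[OF bz, of "1/2"] huu
      hdiv[of "2*n0-1" "x n0"] hdiv[of "2*n0" "x (n0-1)"] hfin[of y] n0
    by (intro holomorphic_intros) auto
  have hL: "Lh holomorphic_on \<Omega>" unfolding Lh_def ty_def fz_def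
    using hGd[OF by', of "-1/2"] huu hdiv[of "2*n0-1" "y n0"] hfin[of z] n0
    by (intro holomorphic_intros) auto
  have aJ: "Jh analytic_on \<Omega>" "Kh analytic_on \<Omega>" "Lh analytic_on \<Omega>" "uu analytic_on \<Omega>"
    using hJ hK hL huu oO by (simp_all add: analytic_on_open)
  have q_nz: "qq (uu s) \<noteq> 0" if "2 < Re s" for s
  proof
    assume "qq (uu s) = 0"
    then have "s \<in> pole_set" using zeros1[of s] that by auto
    then show False using Re_pole_set kappa_lt2 that by fastforce
  qed
  have p_nz: "1 + 2 * uu s \<noteq> 0" if "1 < Re s" for s
  proof
    assume "1 + 2 * uu s = 0"
    then have "uu s = -1/2" by (simp add: field_simps) (metis add.commute add_eq_0_iff)
    then show False using norm_uu_lt[OF that] by simp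
  qed
  have gX: "good_continuation X (\<lambda>s. (Jh s * (1 - 2 * uu s) + uu s * (Kh s + Lh s)) / qq (uu s))"
  proof (rule good_cont_generic)
    show "(\<lambda>s. Jh s * (1 - 2 * uu s) + uu s * (Kh s + Lh s)) analytic_on {s. 1 < Re s}"
      using aJ unfolding \<Omega>_def by (intro analytic_intros) auto
    show "(\<lambda>s. qq (uu s)) analytic_on {s. 1 < Re s}"
      using aJ unfolding \<Omega>_def qq_def by (intro analytic_intros) auto
    show "s \<in> pole_set \<and> deriv (\<lambda>s. qq (uu s)) s \<noteq> 0" if "1 < Re s" "qq (uu s) = 0" for s
      by (rule zeros1[OF that])
    show "(Jh s * (1 - 2 * uu s) + uu s * (Kh s + Lh s)) / qq (uu s) = X s" if s2: "2 < Re s" for s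
    proof -
      have "X s * qq (uu s) = Jh s * (1 - 2 * uu s) + uu s * (Kh s + Lh s)"
      proof -
        have e1: "Jh s = X s - uu s * X s - uu s * Y s - uu s * Z s"
          and e2: "Kh s = Y s - 2 * uu s * X s - 2 * uu s * Z s"
          and e3: "Lh s = Z s - 2 * uu s * X s - 2 * uu s * Y s"
          using sys[OF s2] by auto
        show ?thesis unfolding qq_def e1 e2 e3 by algebra
      qed
      then show ?thesis using q_nz[OF s2] by (simp add: field_simps)
    qed
  qed
  have gY: "good_continuation Y (\<lambda>s. ((1 + 2 * uu s) * ((1 - uu s) * (Kh s + Lh s) + 4 * uu s * Jh s)
        + qq (uu s) * (Kh s - Lh s)) / (2 * (1 + 2 * uu s) * qq (uu s)))"
  proof (rule good_cont_generic)
    show "(\<lambda>s. (1 + 2 * uu s) * ((1 - uu s) * (Kh s + Lh s) + 4 * uu s * Jh s) + qq (uu s) * (Kh s - Lh s)) analytic_on {s. 1 < Re s}"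
      using aJ unfolding \<Omega>_def qq_def by (intro analytic_intros) auto
    show "(\<lambda>s. 2 * (1 + 2 * uu s) * qq (uu s)) analytic_on {s. 1 < Re s}"
      using aJ unfolding \<Omega>_def qq_def by (intro analytic_intros) auto
    show "s \<in> pole_set \<and> deriv (\<lambda>s. 2 * (1 + 2 * uu s) * qq (uu s)) s \<noteq> 0"
      if "1 < Re s" "2 * (1 + 2 * uu s) * qq (uu s) = 0" for s
      by (rule zeros2[OF that])
    show "((1 + 2 * uu s) * ((1 - uu s) * (Kh s + Lh s) + 4 * uu s * Jh s) + qq (uu s) * (Kh s - Lh s))
        / (2 * (1 + 2 * uu s) * qq (uu s)) = Y s" if s2: "2 < Re s" for s
    proof -
      have "Y s * (2 * (1 + 2 * uu s) * qq (uu s)) = (1 + 2 * uu s) * ((1 - uu s) * (Kh s + Lh s) + 4 * uu s * Jh s)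
        + qq (uu s) * (Kh s - Lh s)"
      proof -
        have e1: "Jh s = X s - uu s * X s - uu s * Y s - uu s * Z s"
          and e2: "Kh s = Y s - 2 * uu s * X s - 2 * uu s * Z s"
          and e3: "Lh s = Z s - 2 * uu s * X s - 2 * uu s * Y s"
          using sys[OF s2] by auto
        show ?thesis unfolding qq_def e1 e2 e3 by algebra
      qed
      moreover have "2 * (1 + 2 * uu s) * qq (uu s) \<noteq> 0" 
      proof -
        have p: "1 + 2 * uu s \<noteq> 0" using p_nz[of s] s2 by simp
        show ?thesis using q_nz[OF s2] p by (metis mult_eq_0_iff zero_neq_numeral)
      qed
      ultimately show ?thesis by (simp add: field_simps)
    qed
  qed
  have gZ: "good_continuation Z (\<lambda>s. ((1 + 2 * uu s) * ((1 - uu s) * (Kh s + Lh s) + 4 * uu s * Jh s)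
        - qq (uu s) * (Kh s - Lh s)) / (2 * (1 + 2 * uu s) * qq (uu s)))"
  proof (rule good_cont_generic)
    show "(\<lambda>s. (1 + 2 * uu s) * ((1 - uu s) * (Kh s + Lh s) + 4 * uu s * Jh s) - qq (uu s) * (Kh s - Lh s)) analytic_on {s. 1 < Re s}"
      using aJ unfolding \<Omega>_def qq_def by (intro analytic_intros) auto
    show "(\<lambda>s. 2 * (1 + 2 * uu s) * qq (uu s)) analytic_on {s. 1 < Re s}"
      using aJ unfolding \<Omega>_def qq_def by (intro analytic_intros) auto
    show "s \<in> pole_set \<and> deriv (\<lambda>s. 2 * (1 + 2 * uu s) * qq (uu s)) s \<noteq> 0"
      if "1 < Re s" "2 * (1 + 2 * uu s) * qq (uu s) = 0" for s
      by (rule zeros2[OF that])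
    show "((1 + 2 * uu s) * ((1 - uu s) * (Kh s + Lh s) + 4 * uu s * Jh s) - qq (uu s) * (Kh s - Lh s))
        / (2 * (1 + 2 * uu s) * qq (uu s)) = Z s" if s2: "2 < Re s" for s
    proof -
      have "Z s * (2 * (1 + 2 * uu s) * qq (uu s)) = (1 + 2 * uu s) * ((1 - uu s) * (Kh s + Lh s) + 4 * uu s * Jh s)
        - qq (uu s) * (Kh s - Lh s)"
      proof -
        have e1: "Jh s = X s - uu s * X s - uu s * Y s - uu s * Z s"
          and e2: "Kh s = Y s - 2 * uu s * X s - 2 * uu s * Z s"
          and e3: "Lh s = Z s - 2 * uu s * X s - 2 * uu s * Y s"
          using sys[OF s2] by auto
        show ?thesis unfolding qq_def e1 e2 e3 by algebra
      qed
      moreover have "2 * (1 + 2 * uu s) * qq (uu s) \<noteq> 0" 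
      proof -
        have p: "1 + 2 * uu s \<noteq> 0" using p_nz[of s] s2 by simp
        show ?thesis using q_nz[OF s2] p by (metis mult_eq_0_iff zero_neq_numeral)
      qed
      ultimately show ?thesis by (simp add: field_simps)
    qed
  qed
  show ?thesis using part1 gX gY gZ by blast
qed


lemma bnds_all: "bnd xr" "bnd yr" "bnd zr"
  using bnd_x bnd_y bnd_z by (auto simp: bnd_def)

theorem lemma3p2:
  fixes n0 :: nat
  assumes "n0 \<ge> 2"
  defines "X \<equiv> dser xr n0" and "Y \<equiv> dser yr n0" and "Z \<equiv> dser zr n0"
  shows "(\<forall>s::complex. 2 < Re s \<longrightarrow>
            X s - 2 powr (-s) * X s - 2 powr (-s) * Y s - 2 powr (-s) * Z s
              = 2 powr (-s) * Sig s (-1/2) Y - of_nat (yr n0) / of_nat (2*n0 - 1) powr s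
                + (\<Sum>n\<in>{n0..<2*n0}. of_nat (xr n) / of_nat n powr s)
          \<and> Y s - 2 powr (1-s) * X s - 2 powr (1-s) * Z s
              = 2 powr (-s) * Sig s 1 X + 2 powr (-s) * Sig s (-1/2) X + 2 powr (-s) * Sig s (1/2) Z
                + of_nat (xr (n0 - 1)) / of_nat (2*n0) powr s - of_nat (xr n0) / of_nat (2*n0 - 1) powr s
                + (\<Sum>n\<in>{n0..<2*n0}. of_nat (yr n) / of_nat n powr s)
          \<and> Z s - 2 powr (1-s) * X s - 2 powr (1-s) * Y s
              = 2 powr (1-s) * Sig s (-1/2) Y - 2 * of_nat (yr n0) / of_nat (2*n0 - 1) powr s
                + (\<Sum>n\<in>{n0..<2*n0}. of_nat (zr n) / of_nat n powr s))
       \<and> (\<exists>F. good_continuation X F) \<and> (\<exists>G. good_continuation Y G) \<and> (\<exists>H. good_continuation Z H)"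
    unfolding X_def Y_def Z_def
  by (rule main_generic[OF bnds_all assms(1) rec1 rec2 rec3 rec4 rec5 rec6])

end
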